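(* Fix $\gamma \ge 1$, $\beta \in (0,1)$ and $r > 0$ with $r < \beta$. Let $\Psi$ be a continuous survival function that is asymptotically generalized Gaussian on the right with exponent $\gamma$. For each $n$, let $m = \lfloor n^{1-\beta} \rfloor$ and $\mu = (\gamma r \log n)^{1/\gamma}$, and draw a subset $\mathscr{F} \subset [n]$ of size $m$ uniformly at random. Set $\mu_i = \mu$ for $i \in \mathscr{F}$ and $\mu_i = 0$ otherwise. Let $X_1,\dots,X_n$ be independent with $X_i$ having survival function $\Psi(\cdot - \mu_i)$. Then the oracle risk satisfies $$\liminf_{n\to\infty} \mathbb{E}\Big[\min_{t \in \mathbb{R}} \big(\mathrm{FDP}(\mathscr{R}_t) + \mathrm{FNP}(\mathscr{R}_t)\big)\Big] \ge 1.$$ Here the oracle threshold $\tau_o$ is any minimizer of $t \mapsto \mathrm{FDP}(\mathscr{R}_t)+\mathrm{FNP}(\mathscr{R}_t)$ over $t \in \mathbb{R}$, and the oracle risk is $\mathbb{E}[\mathrm{FDP}(\mathscr{R}_{\tau_o})+\mathrm{FNP}(\mathscr{R}_{\tau_o})]$.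
   Context: The survival function of a random variable $Y$ is $y \mapsto \mathbb{P}(Y \ge y)$. A survival function $\Psi$ is asymptotically generalized Gaussian (AGG) on the right with exponent $\gamma>0$ if $\lim_{x\to\infty} x^{-\gamma}\log\Psi(x) = -1/\gamma$. The $i$-th null hypothesis is $\mu_i = 0$, and $\mathscr{F}$ is the set of false nulls. For a set $\mathscr{R} \subset [n]=\{1,\dots,n\}$ of rejected hypotheses: - $\mathrm{FDP}(\mathscr{R}) = |\mathscr{R}\setminus\mathscr{F}|/|\mathscr{R}|$, - $\mathrm{FNP}(\mathscr{R}) = |\mathscr{F}\setminus\mathscr{R}|/|\mathscr{F}|$, with the convention $0/0=0$. For $t \in \mathbb{R}$, $\mathscr{R}_t = \{i : X_i \ge t\}$. *)

theory Defs
  imports "HOL-Probability.Probability"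
begin

definition survival_of :: "real measure \<Rightarrow> real \<Rightarrow> real" where
  "survival_of D y = measure D {y..}"

definition AGG_right :: "(real \<Rightarrow> real) \<Rightarrow> real \<Rightarrow> bool" where
  "AGG_right \<Psi> \<gamma> \<longleftrightarrow> \<gamma> > 0 \<and>
     ((\<lambda>x. x powr (-\<gamma>) * ln (\<Psi> x)) \<longlongrightarrow> - 1 / \<gamma>) at_top"

text \<open>FDP and FNP (division by zero yields 0, matching the convention 0/0 = 0).\<close>
definition FDP :: "nat set \<Rightarrow> nat set \<Rightarrow> real" where
  "FDP F R = real (card (R - F)) / real (card R)"

definition FNP :: "nat set \<Rightarrow> nat set \<Rightarrow> real" where
  "FNP F R = real (card (F - R)) / real (card F)"

definition rej :: "nat \<Rightarrow> (nat \<Rightarrow> real) \<Rightarrow> real \<Rightarrow> nat set" where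
  "rej n X t = {i \<in> {1..n}. t \<le> X i}"

text \<open>Oracle loss: min over t of FDP(R_t) + FNP(R_t) (the minimum is attained, so it equals the infimum).\<close>
definition oracle_loss :: "nat \<Rightarrow> nat set \<Rightarrow> (nat \<Rightarrow> real) \<Rightarrow> real" where
  "oracle_loss n F X = (INF t. FDP F (rej n X t) + FNP F (rej n X t))"

text \<open>Oracle risk at sample size n: F uniform among the m-subsets of [n], and given F,
  X_1..X_n independent with X_i = Z_i + mu_i, Z_i ~ D (so X_i has survival function Psi(. - mu_i)).\<close>
definition oracle_risk :: "real measure \<Rightarrow> real \<Rightarrow> real \<Rightarrow> real \<Rightarrow> nat \<Rightarrow> real" where
  "oracle_risk D \<gamma> \<beta> r n =
    (let m = nat \<lfloor>real n powr (1 - \<beta>)\<rfloor>;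
         \<mu> = (\<gamma> * r * ln (real n)) powr (1 / \<gamma>);
         S = {F. F \<subseteq> {1..n} \<and> card F = m}
     in (\<Sum>F\<in>S. \<integral>X. oracle_loss n F X
            \<partial>(PiM {1..n} (\<lambda>i. distr D borel (\<lambda>z. z + (if i \<in> F then \<mu> else 0)))))
        / real (card S))"

end

theory Submission
  imports Defs
begin


lemma pps: assumes "\<And>i. prob_space (Mi i)" shows "product_prob_space Mi"
  using assms by (simp add: product_prob_space_def product_prob_space_axioms_def
     product_sigma_finite_def prob_space_imp_sigma_finite)

lemma PiM_integral_prod2:
  fixes Mi :: "'i \<Rightarrow> real measure" and f g :: "real \<Rightarrow> real"
  assumes Pr: "\<And>i. prob_space (Mi i)" and fin: "finite I" and i: "i \<in> I" and j: "j \<in> I" and ij: "i \<noteq> j"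
    and f: "integrable (Mi i) f" and g: "integrable (Mi j) g"
  shows "(\<integral>x. f (x i) * g (x j) \<partial>PiM I Mi) = integral\<^sup>L (Mi i) f * integral\<^sup>L (Mi j) g"
proof -
  interpret product_prob_space Mi I using pps[OF Pr] .
  define h where "h k = (if k = i then f else if k = j then g else (\<lambda>_::real. 1::real))" for k
  have e: "(\<Prod>k\<in>I. h k (x k)) = f (x i) * g (x j)" for x
  proof -
    have "(\<Prod>k\<in>I. h k (x k)) = h i (x i) * (\<Prod>k\<in>I-{i}. h k (x k))"
      using fin i by (simp add: prod.remove)
    also have "(\<Prod>k\<in>I-{i}. h k (x k)) = h j (x j) * (\<Prod>k\<in>I-{i}-{j}. h k (x k))"
      using fin j ij by (subst prod.remove[of _ j]) auto
    also have "(\<Prod>k\<in>I-{i}-{j}. h k (x k)) = 1"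
      by (rule prod.neutral) (auto simp: h_def)
    finally show ?thesis using ij by (simp add: h_def)
  qed
  have "(\<integral>x. f (x i) * g (x j) \<partial>PiM I Mi) = (\<integral>x. (\<Prod>k\<in>I. h k (x k)) \<partial>PiM I Mi)"
    by (simp add: e)
  also have "\<dots> = (\<Prod>k\<in>I. integral\<^sup>L (Mi k) (h k))"
    using f g by (intro product_integral_prod fin) (auto simp: h_def)
  also have "\<dots> = integral\<^sup>L (Mi i) (h i) * (\<Prod>k\<in>I-{i}. integral\<^sup>L (Mi k) (h k))"
    using fin i by (simp add: prod.remove)
  also have "(\<Prod>k\<in>I-{i}. integral\<^sup>L (Mi k) (h k)) = integral\<^sup>L (Mi j) (h j) * (\<Prod>k\<in>I-{i}-{j}. integral\<^sup>L (Mi k) (h k))"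
    using fin j ij by (subst prod.remove[of _ j]) auto
  also have "(\<Prod>k\<in>I-{i}-{j}. integral\<^sup>L (Mi k) (h k)) = 1"
    by (rule prod.neutral) (auto simp: h_def M.prob_space)
  finally show ?thesis using ij by (simp add: h_def)
qed

lemma PiM_integral_single:
  fixes Mi :: "'i \<Rightarrow> real measure" and f g :: "real \<Rightarrow> real"
  assumes Pr: "\<And>i. prob_space (Mi i)" and fin: "finite I" and i: "i \<in> I"
    and f: "integrable (Mi i) f"
  shows "(\<integral>x. f (x i) \<partial>PiM I Mi) = integral\<^sup>L (Mi i) f"
proof -
  interpret product_prob_space Mi I using pps[OF Pr] .
  define h where "h k = (if k = i then f else (\<lambda>_::real. 1::real))" for k
  have e: "(\<Prod>k\<in>I. h k (x k)) = f (x i)" for x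
  proof -
    have "(\<Prod>k\<in>I. h k (x k)) = h i (x i) * (\<Prod>k\<in>I-{i}. h k (x k))"
      using fin i by (simp add: prod.remove)
    also have "(\<Prod>k\<in>I-{i}. h k (x k)) = 1"
      by (rule prod.neutral) (auto simp: h_def)
    finally show ?thesis by (simp add: h_def)
  qed
  have "(\<integral>x. f (x i) \<partial>PiM I Mi) = (\<integral>x. (\<Prod>k\<in>I. h k (x k)) \<partial>PiM I Mi)"
    by (simp add: e)
  also have "\<dots> = (\<Prod>k\<in>I. integral\<^sup>L (Mi k) (h k))"
    using f by (intro product_integral_prod fin) (auto simp: h_def)
  also have "\<dots> = integral\<^sup>L (Mi i) (h i) * (\<Prod>k\<in>I-{i}. integral\<^sup>L (Mi k) (h k))"
    using fin i by (simp add: prod.remove)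
  also have "(\<Prod>k\<in>I-{i}. integral\<^sup>L (Mi k) (h k)) = 1"
    by (rule prod.neutral) (auto simp: h_def M.prob_space)
  finally show ?thesis by (simp add: h_def)
qed

lemma count_moments:
  fixes Mi :: "'i \<Rightarrow> real measure" and s :: real
  assumes Pr: "\<And>i. prob_space (Mi i)" and S: "\<And>i. sets (Mi i) = sets borel"
    and fin: "finite I" and J: "J \<subseteq> I"
  shows "(\<integral>x. (\<Sum>k\<in>J. indicator {s..} (x k) :: real) \<partial>PiM I Mi) = (\<Sum>k\<in>J. measure (Mi k) {s..})"
    and "(\<integral>x. ((\<Sum>k\<in>J. indicator {s..} (x k) :: real) - (\<Sum>k\<in>J. measure (Mi k) {s..}))\<^sup>2 \<partial>PiM I Mi)
          \<le> (\<Sum>k\<in>J. measure (Mi k) {s..})"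
proof -
  interpret product_prob_space Mi I using pps[OF Pr] .
  have fJ: "finite J" using fin J finite_subset by auto
  have comp: "(\<lambda>x. x k) \<in> borel_measurable (PiM I Mi)" if "k \<in> I" for k
    using measurable_component_singleton[OF that, of Mi] measurable_cong_sets[OF refl S] by blast
  have intb: "integrable (PiM I Mi) f" if "f \<in> borel_measurable (PiM I Mi)" "\<And>x. \<bar>f x\<bar> \<le> B" for f and B :: real
    using that by (intro integrable_const_bound[where B=B]) auto
  define ind where "ind k x = (indicator {s..} (x k) :: real)" for k and x :: "'i \<Rightarrow> real"
  define p where "p k = measure (Mi k) {s..}" for k
  have indm: "ind k \<in> borel_measurable (PiM I Mi)" if "k \<in> I" for k
    unfolding ind_def using comp[OF that] by measurable
  have ind01: "0 \<le> ind k x" "ind k x \<le> 1" for k x by (auto simp: ind_def indicator_def)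
  have intMi: "integrable (Mi k) (indicator {s..} :: real \<Rightarrow> real)" for k
    by (rule integrable_real_indicator) (auto simp: S M.emeasure_finite top.not_eq_extremum[symmetric])
  have intMik: "integral\<^sup>L (Mi k) (indicator {s..} :: real \<Rightarrow> real) = p k" for k
    by (simp add: p_def S)
  have E1: "(\<integral>x. ind k x \<partial>PiM I Mi) = p k" if "k \<in> I" for k
    unfolding ind_def using PiM_integral_single[OF Pr fin that intMi] intMik by simp
  have E2: "(\<integral>x. ind k x * ind l x \<partial>PiM I Mi) = (if k = l then p k else p k * p l)" if "k \<in> I" "l \<in> I" for k l
  proof (cases "k = l")
    case True
    have e: "(\<lambda>x. ind k x * ind l x) = ind k" using True by (auto simp: ind_def indicator_def fun_eq_iff)
    show ?thesis unfolding e using E1[OF that(1)] True by simp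
  next
    case False
    then show ?thesis unfolding ind_def using PiM_integral_prod2[OF Pr fin that False intMi intMi] intMik by simp
  qed
  have intind: "integrable (PiM I Mi) (ind k)" if "k \<in> I" for k
    using intb[OF indm[OF that], of 1] ind01[of k] by auto
  have intind2: "integrable (PiM I Mi) (\<lambda>x. ind k x * ind l x)" if "k \<in> I" "l \<in> I" for k l
    using intb[of "\<lambda>x. ind k x * ind l x" 1] indm[OF that(1)] indm[OF that(2)] ind01[of k] ind01[of l]
    by (auto simp: abs_mult intro!: mult_le_one)
  have EC: "(\<integral>x. (\<Sum>k\<in>J. ind k x) \<partial>PiM I Mi) = (\<Sum>k\<in>J. p k)"
  proof -
    have "(\<integral>x. (\<Sum>k\<in>J. ind k x) \<partial>PiM I Mi) = (\<Sum>k\<in>J. (\<integral>x. ind k x \<partial>PiM I Mi))"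
      by (rule Bochner_Integration.integral_sum[where f=ind]) (use J in \<open>auto intro!: intind\<close>)
    also have "\<dots> = (\<Sum>k\<in>J. p k)" using J by (auto intro!: E1 sum.cong)
    finally show ?thesis .
  qed
  then show "(\<integral>x. (\<Sum>k\<in>J. indicator {s..} (x k) :: real) \<partial>PiM I Mi) = (\<Sum>k\<in>J. measure (Mi k) {s..})"
    by (simp add: ind_def p_def)
  define E where "E = (\<Sum>k\<in>J. p k)"
  have pnn: "0 \<le> p k" for k by (simp add: p_def)
  have sq: "(\<Sum>k\<in>J. ind k x)\<^sup>2 = (\<Sum>k\<in>J. \<Sum>l\<in>J. ind k x * ind l x)" for x
    by (simp add: power2_eq_square sum_product)
  have EC2: "(\<integral>x. (\<Sum>k\<in>J. ind k x)\<^sup>2 \<partial>PiM I Mi) = (\<Sum>k\<in>J. \<Sum>l\<in>J. if k = l then p k else p k * p l)"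
  proof -
    have "(\<integral>x. (\<Sum>k\<in>J. \<Sum>l\<in>J. ind k x * ind l x) \<partial>PiM I Mi) = (\<Sum>k\<in>J. (\<integral>x. (\<Sum>l\<in>J. ind k x * ind l x) \<partial>PiM I Mi))"
      by (intro Bochner_Integration.integral_sum) (use J in \<open>auto intro!: integrable_sum intind2\<close>)
    also have "\<dots> = (\<Sum>k\<in>J. \<Sum>l\<in>J. (\<integral>x. ind k x * ind l x \<partial>PiM I Mi))"
      by (intro sum.cong refl Bochner_Integration.integral_sum) (use J in \<open>auto intro!: intind2\<close>)
    also have "\<dots> = (\<Sum>k\<in>J. \<Sum>l\<in>J. if k = l then p k else p k * p l)"
      using J by (intro sum.cong refl E2) auto
    finally show ?thesis unfolding sq .
  qed
  also have "\<dots> \<le> (\<Sum>k\<in>J. \<Sum>l\<in>J. (if k = l then p k else 0) + p k * p l)"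
    by (intro sum_mono) (auto simp: pnn)
  also have "\<dots> = E + E\<^sup>2"
    using fJ by (simp add: sum.distrib E_def power2_eq_square sum_product)
  finally have EC2': "(\<integral>x. (\<Sum>k\<in>J. ind k x)\<^sup>2 \<partial>PiM I Mi) \<le> E + E\<^sup>2" .
  have intC: "integrable (PiM I Mi) (\<lambda>x. \<Sum>k\<in>J. ind k x)"
    using J by (auto intro!: integrable_sum intind)
  have intC2: "integrable (PiM I Mi) (\<lambda>x. (\<Sum>k\<in>J. ind k x)\<^sup>2)"
    unfolding sq by (intro Bochner_Integration.integrable_sum intind2) (use J in auto)
  have "(\<integral>x. ((\<Sum>k\<in>J. ind k x) - E)\<^sup>2 \<partial>PiM I Mi)
      = (\<integral>x. (\<Sum>k\<in>J. ind k x)\<^sup>2 - 2 * E * (\<Sum>k\<in>J. ind k x) + E\<^sup>2 \<partial>PiM I Mi)"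
    by (simp add: power2_diff algebra_simps)
  also have "\<dots> = (\<integral>x. (\<Sum>k\<in>J. ind k x)\<^sup>2 \<partial>PiM I Mi) - 2 * E * E + E\<^sup>2"
    using intC intC2 EC unfolding E_def[symmetric] by (simp add: P.prob_space)
  also have "\<dots> \<le> E" using EC2' by (simp add: power2_eq_square)
  finally show "(\<integral>x. ((\<Sum>k\<in>J. indicator {s..} (x k) :: real) - (\<Sum>k\<in>J. measure (Mi k) {s..}))\<^sup>2 \<partial>PiM I Mi)
          \<le> (\<Sum>k\<in>J. measure (Mi k) {s..})"
    by (simp add: ind_def p_def E_def)
qed

lemma rej_rat: "\<exists>q\<in>\<rat>. rej n X q = rej n X t"
proof -
  define A where "A = insert (t - 1) {X i | i. i \<in> {1..n} \<and> X i < t}"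
  have fA: "finite A" unfolding A_def by auto
  define a where "a = Max A"
  have "a \<in> A" unfolding a_def using fA by (intro Max_in) (auto simp: A_def)
  then have at: "a < t" by (auto simp: A_def)
  obtain q where q: "q \<in> \<rat>" "a < q" "q < t" using Rats_dense_in_real[OF at] by blast
  have "rej n X q = rej n X t"
  proof -
    have "q \<le> X i \<longleftrightarrow> t \<le> X i" if "i \<in> {1..n}" for i
    proof
      assume "q \<le> X i"
      show "t \<le> X i"
      proof (rule ccontr)
        assume "\<not> t \<le> X i"
        then have "X i \<in> A" using that by (auto simp: A_def)
        then have "X i \<le> a" unfolding a_def using fA by simp
        then show False using q \<open>q \<le> X i\<close> by simp
      qed
    qed (use q in simp)
    then show ?thesis unfolding rej_def by auto
  qed
  then show ?thesis using q by blast
qed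

lemma oracle_loss_rat: "oracle_loss n F X = (INF t\<in>\<rat>. FDP F (rej n X t) + FNP F (rej n X t))"
proof -
  have "(\<lambda>t. FDP F (rej n X t) + FNP F (rej n X t)) ` UNIV = (\<lambda>t. FDP F (rej n X t) + FNP F (rej n X t)) ` \<rat>"
  proof
    show "(\<lambda>t. FDP F (rej n X t) + FNP F (rej n X t)) ` UNIV \<subseteq> (\<lambda>t. FDP F (rej n X t) + FNP F (rej n X t)) ` \<rat>"
    proof
      fix y assume "y \<in> (\<lambda>t. FDP F (rej n X t) + FNP F (rej n X t)) ` UNIV"
      then obtain t where t: "y = FDP F (rej n X t) + FNP F (rej n X t)" by auto
      obtain q where "q \<in> \<rat>" "rej n X q = rej n X t" using rej_rat by blast
      then show "y \<in> (\<lambda>t. FDP F (rej n X t) + FNP F (rej n X t)) ` \<rat>" using t by (metis (no_types, lifting) image_eqI)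
    qed
  qed auto
  then show ?thesis unfolding oracle_loss_def by metis
qed

lemma card_filter_sum: "finite A \<Longrightarrow> real (card {i\<in>A. P i}) = (\<Sum>i\<in>A. if P i then 1 else 0)"
  by (simp add: sum.If_cases Int_def)

lemma loss_measurable:
  fixes Mi :: "nat \<Rightarrow> real measure"
  assumes S: "\<And>i. sets (Mi i) = sets borel" and F: "F \<subseteq> {1..n}"
  shows "oracle_loss n F \<in> borel_measurable (PiM {1..n} Mi)"
proof -
  let ?I = "{1..n::nat}"
  have comp: "(\<lambda>x. x k) \<in> borel_measurable (PiM ?I Mi)" if "k \<in> ?I" for k
    using measurable_component_singleton[OF that, of Mi] measurable_cong_sets[OF refl S] by blast
  have cnt: "(\<lambda>X. \<Sum>i\<in>A. if Q (X i) then 1 else (0::real)) \<in> borel_measurable (PiM ?I Mi)"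
    if "A \<subseteq> ?I" and Q: "Measurable.pred borel Q" for A Q
  proof (intro borel_measurable_sum)
    fix i assume "i \<in> A"
    then have [measurable]: "(\<lambda>x. x i) \<in> borel_measurable (PiM ?I Mi)" using comp that by auto
    show "(\<lambda>X. if Q (X i) then 1 else (0::real)) \<in> borel_measurable (PiM ?I Mi)"
      using Q by measurable
  qed
  have g: "(\<lambda>X. FDP F (rej n X t) + FNP F (rej n X t)) \<in> borel_measurable (PiM ?I Mi)" for t
  proof -
    have e: "FDP F (rej n X t) + FNP F (rej n X t) =
        (\<Sum>i\<in>?I-F. if t \<le> X i then 1 else 0) / (\<Sum>i\<in>?I. if t \<le> X i then 1 else 0)
        + (\<Sum>i\<in>F. if X i < t then 1 else 0) / real (card F)" for X
    proof -
      have "rej n X t - F = {i\<in>?I-F. t \<le> X i}" unfolding rej_def by auto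
      then have c1: "real (card (rej n X t - F)) = (\<Sum>i\<in>?I-F. if t \<le> X i then 1 else 0)"
        using card_filter_sum[of "?I-F" "\<lambda>i. t \<le> X i"] by simp
      have "rej n X t = {i\<in>?I. t \<le> X i}" unfolding rej_def by auto
      then have c2: "real (card (rej n X t)) = (\<Sum>i\<in>?I. if t \<le> X i then 1 else 0)"
        using card_filter_sum[of "?I" "\<lambda>i. t \<le> X i"] by simp
      have "F - rej n X t = {i\<in>F. X i < t}" unfolding rej_def using F by auto
      moreover have "finite F" using F finite_subset by blast
      ultimately have c3: "real (card (F - rej n X t)) = (\<Sum>i\<in>F. if X i < t then 1 else 0)"
        using card_filter_sum[of "F" "\<lambda>i. X i < t"] by simp
      show ?thesis unfolding FDP_def FNP_def c1 c2 c3 ..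
    qed
    have [measurable]: "Measurable.pred borel (\<lambda>x::real. t \<le> x)" "Measurable.pred borel (\<lambda>x::real. x < t)"
      by auto
    show ?thesis unfolding e
      using cnt[of "?I - F" "\<lambda>x. t \<le> x"] cnt[of ?I "\<lambda>x. t \<le> x"] cnt[of F "\<lambda>x. x < t"] F
      by (intro borel_measurable_add borel_measurable_divide) auto
  qed
  show ?thesis
    unfolding oracle_loss_rat[abs_def]
    by (rule borel_measurable_cINF_real) (rule countable_rat, rule g)
qed



lemma loss_lower:
  assumes F: "F \<subseteq> {1..n}" and m: "card F = m" "0 < m" and e: "0 < \<epsilon>" "\<epsilon> < 1"
    and A: "real (card {i\<in>F. s \<le> X i}) \<le> \<epsilon> * m"
    and B: "(1 - \<epsilon>) / \<epsilon> * m \<le> real (card {i\<in>{1..n}-F. s \<le> X i})"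
  shows "1 - \<epsilon> \<le> oracle_loss n F X"
  unfolding oracle_loss_def
proof (rule cINF_greatest)
  fix t
  define R where "R = rej n X t"
  have fR: "finite R" unfolding R_def rej_def by auto
  have fF: "finite F" using F finite_subset by blast
  define a where "a = card (R \<inter> F)"
  define b where "b = card (R - F)"
  have cR: "card R = a + b" unfolding a_def b_def using fR by (rule card_Int_Diff)
  have aF: "a \<le> m" unfolding a_def m(1)[symmetric] by (rule card_mono) (use fF in auto)
  have cFR: "card (F - R) = m - a" unfolding a_def m(1)[symmetric]
    using card_Int_Diff[OF fF, of R] by (simp add: Int_commute)
  have FNP: "FNP F R = (real m - real a) / real m" unfolding FNP_def cFR using m aF by simp
  have FDP: "FDP F R = real b / (real a + real b)" unfolding FDP_def cR b_def by simp
  have FDPnn: "0 \<le> FDP F R" unfolding FDP by simp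
  show "1 - \<epsilon> \<le> FDP F (rej n X t) + FNP F (rej n X t)"
  proof (cases "real a \<le> \<epsilon> * m")
    case True
    have "1 - \<epsilon> \<le> (real m - real a) / real m" using True m by (simp add: field_simps)
    then show ?thesis using FDPnn FNP R_def by simp
  next
    case False
    have ts: "t < s"
    proof (rule ccontr)
      assume "\<not> t < s"
      then have "R \<inter> F \<subseteq> {i\<in>F. s \<le> X i}" unfolding R_def rej_def by auto
      then have "a \<le> card {i\<in>F. s \<le> X i}" unfolding a_def using fF by (intro card_mono) auto
      then show False using A False by linarith
    qed
    have "{i\<in>{1..n}-F. s \<le> X i} \<subseteq> R - F" unfolding R_def rej_def using ts by auto
    then have "card {i\<in>{1..n}-F. s \<le> X i} \<le> b" unfolding b_def using fR by (intro card_mono) auto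
    then have bK: "(1 - \<epsilon>) / \<epsilon> * m \<le> real b" using B by linarith
    then have "(1 - \<epsilon>) * m \<le> \<epsilon> * b" using e by (simp add: field_simps)
    moreover have "(1 - \<epsilon>) * a \<le> (1 - \<epsilon>) * m" using aF e by simp
    ultimately have "(1 - \<epsilon>) * (real a + real b) \<le> real b" by (simp add: algebra_simps)
    moreover have "0 < real a + real b"
    proof -
      have "0 < \<epsilon> * m" using e m by simp
      then show ?thesis using False by linarith
    qed
    ultimately have "1 - \<epsilon> \<le> FDP F R" unfolding FDP by (simp add: field_simps)
    moreover have "0 \<le> FNP F R" unfolding FNP using aF by simp
    ultimately show ?thesis unfolding R_def by simp
  qed
qed simp



lemma d: "real x / real y \<le> 1" if "x \<le> y" for x y :: nat
proof (cases "y = 0")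
  case False
  then have "real x \<le> real y" "0 < real y" using that by auto
  then show ?thesis by simp
qed simp

lemma loss_bounds: "0 \<le> oracle_loss n F X" "oracle_loss n F X \<le> 2"
proof -
  have nn: "0 \<le> FDP F R + FNP F R" and le2: "FDP F R + FNP F R \<le> 2" for R
  proof -
    have "FDP F R \<le> 1"
    proof (cases "card R = 0")
      case False then have f: "finite R" by (rule contrapos_np) simp
      show ?thesis unfolding FDP_def by (rule d, rule card_mono) (use f in auto)
    qed (simp add: FDP_def)
    moreover have "FNP F R \<le> 1"
    proof (cases "card F = 0")
      case False then have f: "finite F" by (rule contrapos_np) simp
      show ?thesis unfolding FNP_def by (rule d, rule card_mono) (use f in auto)
    qed (simp add: FNP_def)
    ultimately show "FDP F R + FNP F R \<le> 2" by simp
    show "0 \<le> FDP F R + FNP F R" unfolding FDP_def FNP_def by simp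
  qed
  show "0 \<le> oracle_loss n F X" unfolding oracle_loss_def by (rule cINF_greatest) (auto intro: nn)
  have "oracle_loss n F X \<le> FDP F (rej n X 0) + FNP F (rej n X 0)" unfolding oracle_loss_def
    by (rule cINF_lower) (auto intro: nn intro!: bdd_belowI[of _ 0])
  then show "oracle_loss n F X \<le> 2" using le2 order_trans by blast
qed




lemma integral_bound:
  fixes D :: "real measure" and \<mu> c \<epsilon> :: real and n m :: nat and F :: "nat set"
  assumes D: "prob_space D" "sets D = sets borel"
    and F: "F \<subseteq> {1..n}" "card F = m" "0 < m"
    and e: "0 < \<epsilon>" "\<epsilon> < 1"
    and c: "measure D {c..} \<le> \<epsilon>\<^sup>2"
    and q1: "2 * ((1 - \<epsilon>) / \<epsilon>) * m \<le> real (n - m) * measure D {\<mu> + c..}"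
    and q2: "4 / \<epsilon> \<le> real (n - m) * measure D {\<mu> + c..}"
    and lower: "\<And>X. 1 - \<epsilon> \<le> oracle_loss n F X \<or>
       \<epsilon> * m < (\<Sum>i\<in>F. indicator {\<mu> + c..} (X i) :: real) \<or>
       (\<Sum>i\<in>{1..n}-F. indicator {\<mu> + c..} (X i) :: real) < (1 - \<epsilon>) / \<epsilon> * m"
    and lb: "\<And>X. 0 \<le> oracle_loss n F X" "\<And>X. oracle_loss n F X \<le> 2"
    and meas: "\<And>Mi. (\<And>i. sets (Mi i) = sets borel) \<Longrightarrow> oracle_loss n F \<in> borel_measurable (PiM {1..n} Mi)"
  shows "(1 - \<epsilon>) * (1 - 2 * \<epsilon>) \<le>
    (\<integral>X. oracle_loss n F X \<partial>PiM {1..n} (\<lambda>i. distr D borel (\<lambda>z. z + (if i \<in> F then \<mu> else 0))))"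
proof -
  define Mi where "Mi = (\<lambda>i. distr D borel (\<lambda>z. z + (if i \<in> F then \<mu> else 0)))"
  define I where "I = {1..n}"
  define s where "s = \<mu> + c"
  define q where "q = measure D {s..}"
  define K where "K = (1 - \<epsilon>) / \<epsilon>"
  define E where "E = real (n - m) * q"
  interpret D: prob_space D by fact
  have spD: "space D = UNIV" using sets_eq_imp_space_eq[OF D(2)] by simp
  have mD: "(\<lambda>z. z + d) \<in> measurable D borel" for d :: real
    by (subst measurable_cong_sets[OF D(2) refl]) simp
  have Pr: "prob_space (Mi i)" for i unfolding Mi_def
    by (rule prob_space.prob_space_distr[OF D(1) mD])
  have S: "sets (Mi i) = sets borel" for i unfolding Mi_def by simp
  interpret product_prob_space Mi I using pps[OF Pr] .
  have finI: "finite I" unfolding I_def by simp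
  have msig: "measure (Mi i) {s..} = measure D {c..}" if "i \<in> F" for i
  proof -
    have "measure (Mi i) {s..} = measure D ((\<lambda>z. z + \<mu>) -` {s..} \<inter> space D)"
      unfolding Mi_def using that by (subst measure_distr) (auto intro: mD)
    also have "(\<lambda>z. z + \<mu>) -` {s..} \<inter> space D = {c..}" unfolding s_def spD by auto
    finally show ?thesis .
  qed
  have mnull: "measure (Mi i) {s..} = q" if "i \<notin> F" for i
  proof -
    have "measure (Mi i) {s..} = measure D ((\<lambda>z. z + 0) -` {s..} \<inter> space D)"
      unfolding Mi_def using that by (subst measure_distr) (auto intro: mD[of 0, simplified])
    also have "(\<lambda>z. z + 0) -` {s..} \<inter> space D = {s..}" unfolding spD by auto
    finally show ?thesis unfolding q_def .
  qed
  define Cs where "Cs X = (\<Sum>i\<in>F. indicator {s..} (X i) :: real)" for X :: "nat \<Rightarrow> real"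
  define Cn where "Cn X = (\<Sum>i\<in>I-F. indicator {s..} (X i) :: real)" for X :: "nat \<Rightarrow> real"
  have cardIF: "card (I - F) = n - m" unfolding I_def using F by (simp add: card_Diff_subset finite_subset)
  have ECs: "(\<integral>X. Cs X \<partial>PiM I Mi) = m * measure D {c..}"
    unfolding Cs_def using count_moments(1)[where Mi=Mi and J=F and s=s, OF Pr S finI] F msig by (simp add: I_def)
  have VCn: "(\<integral>X. (Cn X - E)\<^sup>2 \<partial>PiM I Mi) \<le> E"
  proof -
    have "(\<Sum>k\<in>I-F. measure (Mi k) {s..}) = E" unfolding E_def using mnull cardIF by simp
    then show ?thesis unfolding Cn_def using count_moments(2)[where Mi=Mi and J="I - F" and s=s, OF Pr S finI] by simp
  qed
  have Epos: "0 < E" using q2 e unfolding E_def q_def s_def by (smt (verit) divide_pos_pos)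
  have KE: "K * m \<le> E / 2" using q1 unfolding E_def q_def s_def K_def by (simp add: algebra_simps)
  have qc: "measure D {c..} / \<epsilon> \<le> \<epsilon>" using c e by (simp add: divide_le_eq power2_eq_square)
  have "4 / \<epsilon> \<le> E" using q2 unfolding E_def q_def s_def .
  then have "4 \<le> E * \<epsilon>" using e by (simp add: divide_le_eq)
  then have E4: "4 / E \<le> \<epsilon>" using Epos by (simp add: divide_le_eq mult.commute)
  define RHS where "RHS X = (1 - \<epsilon>) * (1 - Cs X / (\<epsilon> * m) - (Cn X - E)\<^sup>2 / (E / 2)\<^sup>2)" for X
  have Csnn: "0 \<le> Cs X" for X unfolding Cs_def by (simp add: sum_nonneg)
  have pw: "RHS X \<le> oracle_loss n F X" for X
  proof -
    have mpos: "0 < \<epsilon> * m" using e F by simp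
    consider "1 - \<epsilon> \<le> oracle_loss n F X" | "\<epsilon> * m < Cs X" | "Cn X < K * m"
      using lower[of X] unfolding Cs_def Cn_def K_def s_def I_def by blast
    then show ?thesis
    proof cases
      case 1
      have "Cs X / (\<epsilon> * m) \<ge> 0" using Csnn mpos by simp
      moreover have "(Cn X - E)\<^sup>2 / (E / 2)\<^sup>2 \<ge> 0" by simp
      ultimately have "1 - Cs X / (\<epsilon> * m) - (Cn X - E)\<^sup>2 / (E / 2)\<^sup>2 \<le> 1" by linarith
      then have "RHS X \<le> (1 - \<epsilon>) * 1" unfolding RHS_def using e by (intro mult_left_mono) auto
      then have "RHS X \<le> 1 - \<epsilon>" by simp
      then show ?thesis using 1 by linarith
    next
      case 2
      then have "Cs X / (\<epsilon> * m) > 1" using mpos by simp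
      then have "1 - Cs X / (\<epsilon> * m) - (Cn X - E)\<^sup>2 / (E / 2)\<^sup>2 < 0" by (smt (verit) divide_nonneg_nonneg zero_le_power2)
      then have "RHS X < 0" unfolding RHS_def using e by (simp add: mult_pos_neg)
      then show ?thesis using lb(1)[of X] by linarith
    next
      case 3
      then have "E / 2 < E - Cn X" using KE by linarith
      then have "(E / 2)\<^sup>2 < (Cn X - E)\<^sup>2" using Epos
        by (smt (verit) power2_commute power_strict_mono zero_le_divide_iff zero_less_numeral)
      then have "(Cn X - E)\<^sup>2 / (E / 2)\<^sup>2 > 1" using Epos by simp
      then have "1 - Cs X / (\<epsilon> * m) - (Cn X - E)\<^sup>2 / (E / 2)\<^sup>2 < 0"
        using Csnn mpos by (smt (verit) divide_nonneg_nonneg less_eq_real_def)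
      then have "RHS X < 0" unfolding RHS_def using e by (simp add: mult_pos_neg)
      then show ?thesis using lb(1)[of X] by linarith
    qed
  qed
  have comp: "(\<lambda>x. x k) \<in> borel_measurable (PiM I Mi)" if "k \<in> I" for k
    using measurable_component_singleton[OF that, of Mi] measurable_cong_sets[OF refl S] by blast
  have intb: "integrable (PiM I Mi) f" if "f \<in> borel_measurable (PiM I Mi)" "\<And>x. \<bar>f x\<bar> \<le> B" for f and B :: real
    using that by (intro integrable_const_bound[where B=B]) auto
  have cntm: "(\<lambda>X. \<Sum>i\<in>A. indicator {s..} (X i) :: real) \<in> borel_measurable (PiM I Mi)" if "A \<subseteq> I" for A
  proof (intro borel_measurable_sum)
    fix i assume "i \<in> A"
    then have [measurable]: "(\<lambda>x. x i) \<in> borel_measurable (PiM I Mi)" using comp that by auto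
    show "(\<lambda>X. indicator {s..} (X i) :: real) \<in> borel_measurable (PiM I Mi)" by measurable
  qed
  have cntb: "\<bar>\<Sum>i\<in>A. indicator {s..} (X i) :: real\<bar> \<le> card A" for A X
  proof -
    have "\<bar>\<Sum>i\<in>A. indicator {s..} (X i) :: real\<bar> = (\<Sum>i\<in>A. indicator {s..} (X i) :: real)"
      by (simp add: sum_nonneg)
    also have "\<dots> \<le> (\<Sum>i\<in>A. 1)" by (intro sum_mono) (simp add: indicator_def)
    finally show ?thesis by simp
  qed
  have intCs: "integrable (PiM I Mi) Cs"
    unfolding Cs_def by (rule intb[OF cntm cntb]) (use F in \<open>simp add: I_def\<close>)
  have Cnm: "Cn \<in> borel_measurable (PiM I Mi)" unfolding Cn_def by (rule cntm) auto
  have intCn2: "integrable (PiM I Mi) (\<lambda>X. (Cn X - E)\<^sup>2)"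
  proof (rule intb[of "\<lambda>X. (Cn X - E)\<^sup>2" "(card (I - F) + \<bar>E\<bar>)\<^sup>2"])
    show "(\<lambda>X. (Cn X - E)\<^sup>2) \<in> borel_measurable (PiM I Mi)" using Cnm by measurable
    fix X
    have "\<bar>Cn X - E\<bar> \<le> card (I - F) + \<bar>E\<bar>" using cntb[of X "I - F"] unfolding Cn_def by linarith
    then have "\<bar>Cn X - E\<bar>\<^sup>2 \<le> (card (I - F) + \<bar>E\<bar>)\<^sup>2"
      by (rule power_mono) simp
    then show "\<bar>(Cn X - E)\<^sup>2\<bar> \<le> (card (I - F) + \<bar>E\<bar>)\<^sup>2" by simp
  qed
  have intL: "integrable (PiM I Mi) (oracle_loss n F)"
    by (rule intb[OF meas[where Mi=Mi, OF S, folded I_def], of 2]) (use lb in auto)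
  have intR: "integrable (PiM I Mi) RHS" unfolding RHS_def using intCs intCn2 by auto
  have "(\<integral>X. RHS X \<partial>PiM I Mi) = (1 - \<epsilon>) * (1 - (\<integral>X. Cs X \<partial>PiM I Mi) / (\<epsilon> * m)
       - (\<integral>X. (Cn X - E)\<^sup>2 \<partial>PiM I Mi) / (E / 2)\<^sup>2)"
    unfolding RHS_def using intCs intCn2 by (simp add: P.prob_space)
  also have "\<dots> \<ge> (1 - \<epsilon>) * (1 - \<epsilon> - \<epsilon>)"
  proof -
    have "(\<integral>X. Cs X \<partial>PiM I Mi) / (\<epsilon> * m) = measure D {c..} / \<epsilon>" unfolding ECs using F by simp
    moreover have "(\<integral>X. (Cn X - E)\<^sup>2 \<partial>PiM I Mi) / (E / 2)\<^sup>2 \<le> E / (E / 2)\<^sup>2"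
      using VCn Epos by (simp add: divide_right_mono)
    moreover have "E / (E / 2)\<^sup>2 = 4 / E" using Epos by (simp add: power2_eq_square field_simps)
    ultimately show ?thesis using qc E4 e by (intro mult_left_mono) auto
  qed
  finally have "(1 - \<epsilon>) * (1 - 2 * \<epsilon>) \<le> (\<integral>X. RHS X \<partial>PiM I Mi)" by simp
  also have "\<dots> \<le> (\<integral>X. oracle_loss n F X \<partial>PiM I Mi)"
    by (rule integral_mono[OF intR intL pw])
  finally show ?thesis unfolding Mi_def I_def .
qed




lemma card_ind: assumes "finite A" shows "real (card {i\<in>A. s \<le> X i}) = (\<Sum>i\<in>A. indicator {s..} (X i) :: real)"
  using card_filter_sum[OF assms, of "\<lambda>i. s \<le> X i"] by (simp add: indicator_def of_bool_def)

lemma risk_ge: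
  fixes D :: "real measure" and \<gamma> \<beta> r \<epsilon> c :: real and n :: nat
  assumes D: "prob_space D" "sets D = sets borel"
    and e: "0 < \<epsilon>" "\<epsilon> < 1"
    and c: "measure D {c..} \<le> \<epsilon>\<^sup>2"
    and m: "0 < nat \<lfloor>real n powr (1 - \<beta>)\<rfloor>" "nat \<lfloor>real n powr (1 - \<beta>)\<rfloor> \<le> n"
    and q1: "2 * ((1 - \<epsilon>) / \<epsilon>) * nat \<lfloor>real n powr (1 - \<beta>)\<rfloor> \<le> real (n - nat \<lfloor>real n powr (1 - \<beta>)\<rfloor>) * measure D {(\<gamma> * r * ln (real n)) powr (1 / \<gamma>) + c..}"
    and q2: "4 / \<epsilon> \<le> real (n - nat \<lfloor>real n powr (1 - \<beta>)\<rfloor>) * measure D {(\<gamma> * r * ln (real n)) powr (1 / \<gamma>) + c..}"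
  shows "(1 - \<epsilon>) * (1 - 2 * \<epsilon>) \<le> oracle_risk D \<gamma> \<beta> r n"
proof -
  define m where "m = nat \<lfloor>real n powr (1 - \<beta>)\<rfloor>"
  define \<mu> where "\<mu> = (\<gamma> * r * ln (real n)) powr (1 / \<gamma>)"
  define S where "S = {F. F \<subseteq> {1..n} \<and> card F = m}"
  have cS: "card S = n choose m" unfolding S_def using n_subsets[of "{1..n}" m] by simp
  have fS: "finite S" unfolding S_def by (rule finite_subset[of _ "Pow {1..n}"]) auto
  have Spos: "0 < card S" unfolding cS using m unfolding m_def by simp
  have each: "(1 - \<epsilon>) * (1 - 2 * \<epsilon>) \<le> (\<integral>X. oracle_loss n F X
            \<partial>(PiM {1..n} (\<lambda>i. distr D borel (\<lambda>z. z + (if i \<in> F then \<mu> else 0)))))" if F: "F \<in> S" for F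
  proof (rule integral_bound[OF D _ _ _ e c])
    show FF: "F \<subseteq> {1..n}" "card F = m" "0 < m" using F m unfolding S_def m_def by auto
    show "2 * ((1 - \<epsilon>) / \<epsilon>) * real m \<le> real (n - m) * measure D {\<mu> + c..}"
      using q1 unfolding m_def \<mu>_def by simp
    show "4 / \<epsilon> \<le> real (n - m) * measure D {\<mu> + c..}"
      using q2 unfolding m_def \<mu>_def by simp
    show "0 \<le> oracle_loss n F X" "oracle_loss n F X \<le> 2" for X by (rule loss_bounds)+
    show "oracle_loss n F \<in> borel_measurable (PiM {1..n} Mi)" if "\<And>i. sets (Mi i) = sets borel" for Mi
      by (rule loss_measurable[OF that FF(1)])
    fix X
    have fF: "finite F" using FF(1) finite_subset by blast
    show "1 - \<epsilon> \<le> oracle_loss n F X \<or>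
       \<epsilon> * m < (\<Sum>i\<in>F. indicator {\<mu> + c..} (X i) :: real) \<or>
       (\<Sum>i\<in>{1..n}-F. indicator {\<mu> + c..} (X i) :: real) < (1 - \<epsilon>) / \<epsilon> * m"
    proof (rule disjCI)
      assume "\<not> (\<epsilon> * m < (\<Sum>i\<in>F. indicator {\<mu> + c..} (X i) :: real) \<or>
       (\<Sum>i\<in>{1..n}-F. indicator {\<mu> + c..} (X i) :: real) < (1 - \<epsilon>) / \<epsilon> * m)"
      then have a: "real (card {i\<in>F. \<mu> + c \<le> X i}) \<le> \<epsilon> * m"
        and b: "(1 - \<epsilon>) / \<epsilon> * m \<le> real (card {i\<in>{1..n}-F. \<mu> + c \<le> X i})"
        using card_ind[OF fF, of "\<mu> + c" X] card_ind[of "{1..n}-F" "\<mu> + c" X] by auto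
      show "1 - \<epsilon> \<le> oracle_loss n F X" by (rule loss_lower[OF FF e a b])
    qed
  qed
  have "(\<Sum>F\<in>S. (1 - \<epsilon>) * (1 - 2 * \<epsilon>)) \<le> (\<Sum>F\<in>S. \<integral>X. oracle_loss n F X
            \<partial>(PiM {1..n} (\<lambda>i. distr D borel (\<lambda>z. z + (if i \<in> F then \<mu> else 0)))))"
    by (rule sum_mono) (rule each)
  then have "(1 - \<epsilon>) * (1 - 2 * \<epsilon>) \<le> (\<Sum>F\<in>S. \<integral>X. oracle_loss n F X
            \<partial>(PiM {1..n} (\<lambda>i. distr D borel (\<lambda>z. z + (if i \<in> F then \<mu> else 0))))) / real (card S)"
    using Spos by (simp add: le_divide_eq mult.commute)
  then show ?thesis unfolding oracle_risk_def Let_def m_def[symmetric] \<mu>_def[symmetric] S_def[symmetric] .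
qed




lemma asym:
  fixes \<Psi> :: "real \<Rightarrow> real" and \<gamma> \<beta> r \<epsilon> c x1 \<eta> :: real
  assumes g: "\<gamma> \<ge> 1" and b: "0 < \<beta>" "\<beta> < 1" and r: "0 < r"
    and e: "0 < \<epsilon>" "\<epsilon> < 1" and c: "0 \<le> c" and eta: "0 < \<eta>"
    and rho: "(1 / \<gamma> + \<eta>) * (1 + \<eta>) * \<gamma> * r < \<beta>"
    and low: "\<And>x. x \<ge> x1 \<Longrightarrow> -1/\<gamma> - \<eta> < x powr (-\<gamma>) * ln (\<Psi> x)"
    and pos: "\<And>x. x \<ge> x1 \<Longrightarrow> 0 < \<Psi> x"
  shows "eventually (\<lambda>n. 0 < nat \<lfloor>real n powr (1 - \<beta>)\<rfloor> \<and> nat \<lfloor>real n powr (1 - \<beta>)\<rfloor> \<le> n \<and>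
     2 * ((1 - \<epsilon>) / \<epsilon>) * nat \<lfloor>real n powr (1 - \<beta>)\<rfloor> \<le> real (n - nat \<lfloor>real n powr (1 - \<beta>)\<rfloor>) * \<Psi> ((\<gamma> * r * ln (real n)) powr (1 / \<gamma>) + c) \<and>
     4 / \<epsilon> \<le> real (n - nat \<lfloor>real n powr (1 - \<beta>)\<rfloor>) * \<Psi> ((\<gamma> * r * ln (real n)) powr (1 / \<gamma>) + c)) sequentially"
proof -
  define K where "K = (1 - \<epsilon>) / \<epsilon>"
  define L where "L = 4 * K + 8 / \<epsilon>"
  define \<rho> where "\<rho> = (1 / \<gamma> + \<eta>) * (1 + \<eta>) * \<gamma> * r"
  define \<delta> where "\<delta> = \<beta> - \<rho>"
  have gpos: "0 < \<gamma>" using g by simp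
  have Kpos: "0 \<le> K" unfolding K_def using e by simp
  have e8: "0 < 8 / \<epsilon>" using e by simp
  have Lpos: "0 < L" unfolding L_def using Kpos e8 by linarith
  have dpos: "0 < \<delta>" unfolding \<delta>_def \<rho>_def using rho by simp
  have a1: "1 < (1 + \<eta>) powr (1 / \<gamma>)" using powr_less_mono2[of "1/\<gamma>" 1 "1+\<eta>"] eta gpos by simp
  define A0 where "A0 = max 1 (max x1 (c / ((1 + \<eta>) powr (1 / \<gamma>) - 1)))"
  have A0: "1 \<le> A0" "x1 \<le> A0" "c / ((1 + \<eta>) powr (1 / \<gamma>) - 1) \<le> A0" unfolding A0_def by auto
  define T where "T = max (max 1 (2 powr (1 / \<beta>))) (max (exp (A0 powr \<gamma> / (\<gamma> * r))) (L powr (1 / \<delta>)))"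
  obtain N :: nat where N: "T \<le> real N" using real_arch_simple by blast
  show ?thesis
  proof (rule eventually_sequentiallyI[of N])
    fix n assume "N \<le> n"
    then have nT: "T \<le> real n" using N by linarith
    have n1: "1 \<le> real n" using nT unfolding T_def by simp
    have npos: "0 < real n" using n1 by simp
    have "2 powr (1 / \<beta>) \<le> real n" using nT unfolding T_def by simp
    then have "(2 powr (1 / \<beta>)) powr \<beta> \<le> real n powr \<beta>" using b by (intro powr_mono2) auto
    then have nb2: "2 \<le> real n powr \<beta>" using b by (simp add: powr_powr)
    have "exp (A0 powr \<gamma> / (\<gamma> * r)) \<le> real n" using nT unfolding T_def by simp
    then have "A0 powr \<gamma> / (\<gamma> * r) \<le> ln (real n)" using npos by (metis exp_le_cancel_iff exp_ln)
    then have lnA: "A0 powr \<gamma> \<le> \<gamma> * r * ln (real n)" using gpos r by (simp add: divide_le_eq mult.commute)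
    define \<mu> where "\<mu> = (\<gamma> * r * ln (real n)) powr (1 / \<gamma>)"
    have lnn: "0 \<le> ln (real n)" using n1 by simp
    have "(A0 powr \<gamma>) powr (1 / \<gamma>) \<le> \<mu>" unfolding \<mu>_def using lnA gpos by (intro powr_mono2) auto
    then have muA: "A0 \<le> \<mu>" using gpos A0(1) by (simp add: powr_powr powr_one)
    have mug: "\<mu> powr \<gamma> = \<gamma> * r * ln (real n)" unfolding \<mu>_def using gpos r lnn
      by (simp add: powr_powr powr_one)
    define x where "x = \<mu> + c"
    have xx1: "x1 \<le> x" unfolding x_def using muA A0 c by linarith
    have xpos: "1 \<le> x" unfolding x_def using muA A0 c by linarith
    have "c \<le> A0 * ((1 + \<eta>) powr (1 / \<gamma>) - 1)"
      using A0(3) a1 by (simp add: divide_le_eq mult.commute)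
    also have "\<dots> \<le> \<mu> * ((1 + \<eta>) powr (1 / \<gamma>) - 1)" using muA a1 by (intro mult_right_mono) auto
    finally have "c \<le> ((1 + \<eta>) powr (1 / \<gamma>) - 1) * \<mu>" by (simp add: mult.commute)
    then have "x \<le> (1 + \<eta>) powr (1 / \<gamma>) * \<mu>" unfolding x_def by (simp add: algebra_simps)
    then have "x powr \<gamma> \<le> ((1 + \<eta>) powr (1 / \<gamma>) * \<mu>) powr \<gamma>" using xpos gpos by (intro powr_mono2) auto
    also have "\<dots> = (1 + \<eta>) * \<mu> powr \<gamma>" using gpos eta by (simp add: powr_mult powr_powr powr_one)
    finally have xg: "x powr \<gamma> \<le> (1 + \<eta>) * (\<gamma> * r * ln (real n))" unfolding mug .
    have l0: "-1/\<gamma> - \<eta> < x powr (-\<gamma>) * ln (\<Psi> x)" by (rule low[OF xx1])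
    have xgpos: "0 < x powr \<gamma>" using xpos by simp
    have "x powr \<gamma> * (-1/\<gamma> - \<eta>) < x powr \<gamma> * (x powr (-\<gamma>) * ln (\<Psi> x))"
      using l0 xgpos by (rule mult_strict_left_mono)
    also have "\<dots> = ln (\<Psi> x)" using xpos by (simp add: powr_minus field_simps)
    finally have l1: "- (1/\<gamma> + \<eta>) * x powr \<gamma> < ln (\<Psi> x)" by (simp add: algebra_simps)
    have "(1/\<gamma> + \<eta>) * x powr \<gamma> \<le> (1/\<gamma> + \<eta>) * ((1 + \<eta>) * (\<gamma> * r * ln (real n)))"
      using xg gpos eta by (intro mult_left_mono) auto
    also have "\<dots> = \<rho> * ln (real n)" unfolding \<rho>_def using gpos by (simp add: field_simps)
    finally have l2: "- \<rho> * ln (real n) < ln (\<Psi> x)" using l1 by linarith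
    have "real n powr (- \<rho>) = exp (- \<rho> * ln (real n))" using npos by (simp add: powr_def)
    also have "\<dots> < exp (ln (\<Psi> x))" using l2 by simp
    also have "\<dots> = \<Psi> x" using pos[OF xx1] by simp
    finally have Pl: "real n powr (- \<rho>) < \<Psi> x" .
    have "L powr (1 / \<delta>) \<le> real n" using nT unfolding T_def by simp
    then have "(L powr (1 / \<delta>)) powr \<delta> \<le> real n powr \<delta>" using dpos Lpos by (intro powr_mono2) auto
    then have nd: "L \<le> real n powr \<delta>" using dpos Lpos by (simp add: powr_powr powr_one)
    have "real n powr \<delta> = real n powr \<beta> * real n powr (- \<rho>)" unfolding \<delta>_def
      by (simp add: powr_add[symmetric])
    also have "\<dots> \<le> real n powr \<beta> * \<Psi> x" using Pl by (intro mult_left_mono) auto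
    finally have bPL: "L \<le> real n powr \<beta> * \<Psi> x" using nd by linarith
    define p where "p = real n powr (1 - \<beta>)"
    have p1: "1 \<le> p" unfolding p_def using n1 b by (intro ge_one_powr_ge_zero) auto
    have pn: "p * real n powr \<beta> = real n" unfolding p_def using npos by (simp add: powr_add[symmetric])
    have p2: "p \<le> real n / 2" 
    proof -
      have "p * 2 \<le> p * real n powr \<beta>" using nb2 p1 by (intro mult_left_mono) auto
      then show ?thesis using pn by simp
    qed
    define m where "m = nat \<lfloor>p\<rfloor>"
    have m1: "0 < m" unfolding m_def using p1 by simp
    have mp: "real m \<le> p" unfolding m_def using p1 by linarith
    have mn: "m \<le> n" using mp p2 npos by linarith
    have nm: "real (n - m) \<ge> real n / 2" using mn mp p2 by (simp add: of_nat_diff)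
    have Pnn: "0 \<le> \<Psi> x" using pos[OF xx1] by simp
    have "p * L / 2 \<le> p * (real n powr \<beta> * \<Psi> x) / 2" using bPL p1 by simp
    also have "\<dots> = real n / 2 * \<Psi> x" using pn by (simp add: algebra_simps)
    also have "\<dots> \<le> real (n - m) * \<Psi> x" using nm Pnn by (intro mult_right_mono) auto
    finally have main: "p * L / 2 \<le> real (n - m) * \<Psi> x" .
    have q1: "2 * K * m \<le> real (n - m) * \<Psi> x"
    proof -
      have "2 * K * m \<le> 2 * K * p" using mp Kpos by (simp add: mult_left_mono)
      also have "\<dots> \<le> p * L / 2" using p1 Kpos e unfolding L_def by (simp add: algebra_simps)
      finally show ?thesis using main by linarith
    qed
    have q2: "4 / \<epsilon> \<le> real (n - m) * \<Psi> x"
    proof -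
      have "4 / \<epsilon> \<le> L / 2" unfolding L_def using Kpos by simp
      also have "\<dots> \<le> p * L / 2" using p1 Lpos by simp
      finally show ?thesis using main by linarith
    qed
    show "0 < nat \<lfloor>real n powr (1 - \<beta>)\<rfloor> \<and> nat \<lfloor>real n powr (1 - \<beta>)\<rfloor> \<le> n \<and>
     2 * ((1 - \<epsilon>) / \<epsilon>) * nat \<lfloor>real n powr (1 - \<beta>)\<rfloor> \<le> real (n - nat \<lfloor>real n powr (1 - \<beta>)\<rfloor>) * \<Psi> ((\<gamma> * r * ln (real n)) powr (1 / \<gamma>) + c) \<and>
     4 / \<epsilon> \<le> real (n - nat \<lfloor>real n powr (1 - \<beta>)\<rfloor>) * \<Psi> ((\<gamma> * r * ln (real n)) powr (1 / \<gamma>) + c)"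
      using m1 mn q1 q2 unfolding m_def p_def x_def \<mu>_def K_def by simp
  qed
qed


theorem theorem1:
  fixes D :: "real measure" and \<Psi> :: "real \<Rightarrow> real" and \<gamma> \<beta> r :: real
  assumes "prob_space D" and "sets D = sets borel"
    and "\<Psi> = survival_of D"
    and "continuous_on UNIV \<Psi>"
    and "AGG_right \<Psi> \<gamma>"
    and "\<gamma> \<ge> 1" and "0 < \<beta>" and "\<beta> < 1" and "0 < r" and "r < \<beta>"
  shows "liminf (\<lambda>n. ereal (oracle_risk D \<gamma> \<beta> r n)) \<ge> 1"
proof -
  note D = assms(1,2)
  interpret D: prob_space D by fact
  have Psi: "\<And>x. \<Psi> x = measure D {x..}" using assms(3) by (simp add: survival_of_def)
  have g: "1 \<le> \<gamma>" and b: "0 < \<beta>" "\<beta> < 1" and r: "0 < r" "r < \<beta>" using assms by auto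
  have gpos: "0 < \<gamma>" using g by simp
  have lim: "((\<lambda>x. x powr (-\<gamma>) * ln (\<Psi> x)) \<longlongrightarrow> - 1 / \<gamma>) at_top"
    using assms(5) by (simp add: AGG_right_def)
  show ?thesis unfolding le_Liminf_iff
  proof (intro allI impI)
    fix y :: ereal assume y: "y < 1"
    obtain y' :: real where y': "y \<le> ereal y'" "y' < 1"
    proof (cases y)
      case (real y0) then show ?thesis using that y by auto
    next
      case PInf then show ?thesis using y by simp
    next
      case MInf then show ?thesis using that[of 0] by simp
    qed
    define \<epsilon> where "\<epsilon> = min (1/8) ((1 - y') / 8)"
    have e: "0 < \<epsilon>" "\<epsilon> < 1" unfolding \<epsilon>_def using y' by auto
    have "\<epsilon> \<le> (1 - y') / 8" unfolding \<epsilon>_def by (rule min.cobounded2)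
    then have e3: "3 * \<epsilon> < 1 - y'" using y'(2) by (simp add: field_simps)
    have ye: "y' < (1 - \<epsilon>) * (1 - 2 * \<epsilon>)"
    proof -
      have "(1 - \<epsilon>) * (1 - 2 * \<epsilon>) = 1 - 3 * \<epsilon> + 2 * \<epsilon>\<^sup>2" by (simp add: algebra_simps power2_eq_square)
      moreover have "0 \<le> 2 * \<epsilon>\<^sup>2" by simp
      ultimately show ?thesis using e3 by linarith
    qed
    define \<eta> where "\<eta> = min 1 ((\<beta> / r - 1) / (2 * (2 * \<gamma> + 1)))"
    have br: "0 < \<beta> / r - 1" using r by (simp add: field_simps)
    define Q where "Q = (\<beta> / r - 1) / (2 * (2 * \<gamma> + 1))"
    have Qpos: "0 < Q" unfolding Q_def using br gpos by simp
    have "\<eta> \<le> Q" unfolding \<eta>_def Q_def by (rule min.cobounded2)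
    then have "\<eta> * (2 * \<gamma> + 1) \<le> Q * (2 * \<gamma> + 1)" using gpos by (intro mult_right_mono) auto
    also have "\<dots> = (\<beta> / r - 1) / 2"
    proof -
      define t where "t = \<beta> / r - 1"
      have "t / (2 * (2 * \<gamma> + 1)) * (2 * \<gamma> + 1) = t / 2" using gpos by (simp add: field_simps)
      then show ?thesis unfolding Q_def t_def .
    qed
    finally have eta3: "\<eta> * (2 * \<gamma> + 1) \<le> (\<beta> / r - 1) / 2" .
    have eta: "0 < \<eta>" "\<eta> \<le> 1" "\<eta> * (2 * \<gamma> + 1) \<le> (\<beta> / r - 1) / 2"
      using Qpos eta3 unfolding \<eta>_def Q_def[symmetric] by auto
    have rho: "(1 / \<gamma> + \<eta>) * (1 + \<eta>) * \<gamma> * r < \<beta>"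
    proof -
      have "(1 / \<gamma> + \<eta>) * (1 + \<eta>) * \<gamma> = 1 + \<eta> + \<eta> * \<gamma> + \<eta> * \<eta> * \<gamma>"
        using gpos by (simp add: field_simps)
      also have "\<eta> * \<eta> * \<gamma> \<le> \<eta> * \<gamma>" using eta gpos by (simp add: mult_le_cancel_right1 mult_right_le_one_le)
      then have "1 + \<eta> + \<eta> * \<gamma> + \<eta> * \<eta> * \<gamma> \<le> 1 + \<eta> * (2 * \<gamma> + 1)" by (simp add: algebra_simps)
      also have "\<dots> \<le> 1 + (\<beta> / r - 1) / 2" using eta by simp
      finally have A1: "(1 / \<gamma> + \<eta>) * (1 + \<eta>) * \<gamma> * r \<le> (1 + (\<beta> / r - 1) / 2) * r"
        using r by (intro mult_right_mono) auto
      have A2: "(1 + (\<beta> / r - 1) / 2) * r = (r + \<beta>) / 2" using r by (simp add: field_simps)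
      have "(1 / \<gamma> + \<eta>) * (1 + \<eta>) * \<gamma> * r \<le> (r + \<beta>) / 2" using A1 unfolding A2 .
      moreover have "(r + \<beta>) / 2 < \<beta>" using r by simp
      ultimately show ?thesis by (rule le_less_trans)
    qed
    have "eventually (\<lambda>x. -1/\<gamma> - \<eta> < x powr (-\<gamma>) * ln (\<Psi> x)) at_top"
      using order_tendstoD(1)[OF lim] eta by simp
    then obtain x1 where low: "\<And>x. x \<ge> x1 \<Longrightarrow> -1/\<gamma> - \<eta> < x powr (-\<gamma>) * ln (\<Psi> x)"
      by (auto simp: eventually_at_top_linorder)
    have "eventually (\<lambda>x. x powr (-\<gamma>) * ln (\<Psi> x) < -1/(2*\<gamma>)) at_top"
      using order_tendstoD(2)[OF lim, of "-1/(2*\<gamma>)"] gpos by (simp add: divide_less_eq)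
    then obtain x2 where up: "\<And>x. x \<ge> x2 \<Longrightarrow> x powr (-\<gamma>) * ln (\<Psi> x) < -1/(2*\<gamma>)"
      by (auto simp: eventually_at_top_linorder)
    have pos: "0 < \<Psi> x" if "x \<ge> x2" for x
    proof -
      have "0 \<le> \<Psi> x" unfolding Psi by simp
      moreover have "\<Psi> x \<noteq> 0" using up[OF that] gpos by auto
      ultimately show ?thesis by simp
    qed
    define c where "c = max (max x2 1) (4 * \<gamma> * \<bar>ln \<epsilon>\<bar>)"
    have c: "x2 \<le> c" "1 \<le> c" "4 * \<gamma> * \<bar>ln \<epsilon>\<bar> \<le> c" unfolding c_def by auto
    have cb: "measure D {c..} \<le> \<epsilon>\<^sup>2"
    proof -
      have cg: "0 < c powr \<gamma>" using c by simp
      have "c powr \<gamma> * (c powr (-\<gamma>) * ln (\<Psi> c)) < c powr \<gamma> * (-1/(2*\<gamma>))"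
        using up[OF c(1)] cg by (rule mult_strict_left_mono)
      moreover have "c powr \<gamma> * (c powr (-\<gamma>) * ln (\<Psi> c)) = ln (\<Psi> c)" using c by (simp add: powr_minus field_simps)
      ultimately have l1: "ln (\<Psi> c) < - (c powr \<gamma> / (2 * \<gamma>))" by simp
      have "c = c powr 1" using c by (simp add: powr_one)
      also have "\<dots> \<le> c powr \<gamma>" using c g by (intro powr_mono) auto
      finally have "4 * \<gamma> * \<bar>ln \<epsilon>\<bar> \<le> c powr \<gamma>" using c by linarith
      then have "2 * \<bar>ln \<epsilon>\<bar> \<le> c powr \<gamma> / (2 * \<gamma>)" using gpos by (simp add: field_simps)
      moreover have "ln (\<epsilon>\<^sup>2) = 2 * ln \<epsilon>" using e by (simp add: ln_mult power2_eq_square)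
      ultimately have "ln (\<Psi> c) < ln (\<epsilon>\<^sup>2)" using l1 by linarith
      then have "\<Psi> c < \<epsilon>\<^sup>2" using pos[OF c(1)] e by simp
      then show ?thesis unfolding Psi by simp
    qed
    have ev: "eventually (\<lambda>n. 0 < nat \<lfloor>real n powr (1 - \<beta>)\<rfloor> \<and> nat \<lfloor>real n powr (1 - \<beta>)\<rfloor> \<le> n \<and>
     2 * ((1 - \<epsilon>) / \<epsilon>) * nat \<lfloor>real n powr (1 - \<beta>)\<rfloor> \<le> real (n - nat \<lfloor>real n powr (1 - \<beta>)\<rfloor>) * \<Psi> ((\<gamma> * r * ln (real n)) powr (1 / \<gamma>) + c) \<and>
     4 / \<epsilon> \<le> real (n - nat \<lfloor>real n powr (1 - \<beta>)\<rfloor>) * \<Psi> ((\<gamma> * r * ln (real n)) powr (1 / \<gamma>) + c)) sequentially"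
      by (rule asym[OF g b r(1) e _ eta(1) rho, of c "max x1 x2"]) (use c low pos in auto)
    show "eventually (\<lambda>n. y < ereal (oracle_risk D \<gamma> \<beta> r n)) sequentially"
    proof (rule eventually_mono[OF ev])
      fix n assume H: "0 < nat \<lfloor>real n powr (1 - \<beta>)\<rfloor> \<and> nat \<lfloor>real n powr (1 - \<beta>)\<rfloor> \<le> n \<and>
     2 * ((1 - \<epsilon>) / \<epsilon>) * nat \<lfloor>real n powr (1 - \<beta>)\<rfloor> \<le> real (n - nat \<lfloor>real n powr (1 - \<beta>)\<rfloor>) * \<Psi> ((\<gamma> * r * ln (real n)) powr (1 / \<gamma>) + c) \<and>
     4 / \<epsilon> \<le> real (n - nat \<lfloor>real n powr (1 - \<beta>)\<rfloor>) * \<Psi> ((\<gamma> * r * ln (real n)) powr (1 / \<gamma>) + c)"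
      have "(1 - \<epsilon>) * (1 - 2 * \<epsilon>) \<le> oracle_risk D \<gamma> \<beta> r n"
        using H unfolding Psi by (elim conjE) (rule risk_ge[OF D e cb])
      then have "y' < oracle_risk D \<gamma> \<beta> r n" using ye by linarith
      then show "y < ereal (oracle_risk D \<gamma> \<beta> r n)" 
      proof -
        have "ereal y' < ereal (oracle_risk D \<gamma> \<beta> r n)" using \<open>y' < oracle_risk D \<gamma> \<beta> r n\<close> by simp
        then show ?thesis using y'(1) by (rule le_less_trans[rotated])
      qed
    qed
  qed
qed


end
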